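(* Let $\mathcal{H}$ be an infinite-dimensional separable Hilbert space with orthonormal bases $\{e_n\}$, $\{f_n\}$, $\mathcal{D}_e=\mathrm{span}\{e_n\}$, $\mathcal{D}_f=\mathrm{span}\{f_n\}$, $\mathcal{D}_e^2=\mathrm{span}\{|e_k\rangle\langle e_\ell|\}$. Let $\mathcal{Q}$ be a completely positive map from $\mathcal{D}_e^2$ into sesquilinear forms on $\mathcal{D}_f$, represented as $\mathcal{Q}(\rho)=\sum_\alpha K_\alpha\rho K_\alpha^\dagger$ by a countable family of generalized operators $K_\alpha$. If $\mathcal{Q}$ is trace preserving (each $\mathcal{Q}(\rho)$ is given by a trace class operator with trace equal to $\mathrm{Tr}\,\rho$), then each $K_\alpha$ extends to a bounded operator in $\mathcal{B}(\mathcal{H})$, and $K_\alpha^\dagger=K_\alpha^*$.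
   Context: A generalized operator $K$ is a linear map from $\mathcal{D}_e$ into the conjugate algebraic dual of $\mathcal{D}_f$; write $\langle f|K|e\rangle$ for the value of $Ke$ at $f\in\mathcal{D}_f$, and $\langle e|K^\dagger|f\rangle=\langle f|K|e\rangle^*$. The representation $\mathcal{Q}(\rho)=\sum_\alpha K_\alpha\rho K_\alpha^\dagger$ means $\langle g|\mathcal{Q}(|\phi\rangle\langle\phi'|)|f\rangle=\sum_\alpha\langle g|K_\alpha|\phi\rangle\langle f|K_\alpha|\phi'\rangle^*$ for $\phi,\phi'\in\mathcal{D}_e$, $f,g\in\mathcal{D}_f$. Complete positivity: $\sum_{k,\ell}\langle\psi_k|\mathcal{Q}(|\phi_k\rangle\langle\phi_\ell|)|\psi_\ell\rangle\ge0$ for all finite families $\phi_k\in\mathcal{D}_e$, $\psi_k\in\mathcal{D}_f$. $K_\alpha^*$ denotes the Hilbert space adjoint of the bounded extension. *)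

theory Defs
  imports "HOL-Analysis.Analysis"
begin

text \<open>The separable infinite-dimensional Hilbert space is modelled as l2(nat) of complex
  sequences. Inner product is conjugate-linear in the FIRST argument (physics convention).\<close>

type_synonym vec = "nat \<Rightarrow> complex"

definition l2 :: "vec set" where
  "l2 = {x. summable (\<lambda>n. (cmod (x n))^2)}"

definition ip :: "vec \<Rightarrow> vec \<Rightarrow> complex" where
  "ip x y = (\<Sum>n. cnj (x n) * y n)"

definition l2norm :: "vec \<Rightarrow> real" where
  "l2norm x = sqrt (\<Sum>n. (cmod (x n))^2)"

definition is_ONB :: "(nat \<Rightarrow> vec) \<Rightarrow> bool" where
  "is_ONB u \<longleftrightarrow> (\<forall>n. u n \<in> l2)
     \<and> (\<forall>m n. ip (u m) (u n) = (if m = n then 1 else 0))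
     \<and> (\<forall>x\<in>l2. (\<forall>n. ip (u n) x = 0) \<longrightarrow> x = (\<lambda>_. 0))"

definition fspan :: "(nat \<Rightarrow> vec) \<Rightarrow> vec set" where
  "fspan u = {x. \<exists>(c::nat \<Rightarrow> complex) N. x = (\<lambda>i. \<Sum>n<N. c n * u n i)}"

text \<open>Generalized operator K: D_e -> conjugate algebraic dual of D_f, represented by
  its values: K phi g = <g|K|phi>, linear in phi, conjugate-linear in g.\<close>
definition gen_op :: "(nat \<Rightarrow> vec) \<Rightarrow> (nat \<Rightarrow> vec) \<Rightarrow> (vec \<Rightarrow> vec \<Rightarrow> complex) \<Rightarrow> bool" where
  "gen_op e f K \<longleftrightarrow>
     (\<forall>\<phi>\<in>fspan e. \<forall>\<psi>\<in>fspan e. \<forall>g\<in>fspan f. \<forall>a b.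
         K (\<lambda>i. a * \<phi> i + b * \<psi> i) g = a * K \<phi> g + b * K \<psi> g)
   \<and> (\<forall>\<phi>\<in>fspan e. \<forall>g\<in>fspan f. \<forall>h\<in>fspan f. \<forall>a b.
         K \<phi> (\<lambda>i. a * g i + b * h i) = cnj a * K \<phi> g + cnj b * K \<phi> h)"

text \<open>Elements of D_e^2 = span{|e_k><e_l|} are represented by their finitely supported
  coefficient matrices c, rho = sum c k l |e_k><e_l|.\<close>
definition fin_supp_mat :: "(nat \<Rightarrow> nat \<Rightarrow> complex) \<Rightarrow> bool" where
  "fin_supp_mat c \<longleftrightarrow> finite {(k, l). c k l \<noteq> 0}"

text \<open>Coefficient matrix of |phi><phi'| in the basis e.\<close>
definition rank1 :: "(nat \<Rightarrow> vec) \<Rightarrow> vec \<Rightarrow> vec \<Rightarrow> (nat \<Rightarrow> nat \<Rightarrow> complex)" where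
  "rank1 e \<phi> \<phi>' = (\<lambda>k l. ip (e k) \<phi> * cnj (ip (e l) \<phi>'))"

definition mat_trace :: "(nat \<Rightarrow> nat \<Rightarrow> complex) \<Rightarrow> complex" where
  "mat_trace c = infsum (\<lambda>k. c k k) UNIV"

definition bdd_op :: "(vec \<Rightarrow> vec) \<Rightarrow> bool" where
  "bdd_op T \<longleftrightarrow> (\<forall>x\<in>l2. T x \<in> l2)
     \<and> (\<forall>x\<in>l2. \<forall>y\<in>l2. \<forall>a b. T (\<lambda>i. a * x i + b * y i) = (\<lambda>i. a * T x i + b * T y i))
     \<and> (\<exists>C. \<forall>x\<in>l2. l2norm (T x) \<le> C * l2norm x)"

definition orthonormal_fam :: "nat \<Rightarrow> (nat \<Rightarrow> vec) \<Rightarrow> bool" where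
  "orthonormal_fam N u \<longleftrightarrow> (\<forall>i<N. u i \<in> l2)
     \<and> (\<forall>i<N. \<forall>j<N. ip (u i) (u j) = (if i = j then 1 else 0))"

definition trace_class :: "(vec \<Rightarrow> vec) \<Rightarrow> bool" where
  "trace_class T \<longleftrightarrow> bdd_op T \<and>
     (\<exists>B. \<forall>N u v. orthonormal_fam N u \<and> orthonormal_fam N v \<longrightarrow>
            (\<Sum>i<N. cmod (ip (v i) (T (u i)))) \<le> B)"

definition op_trace :: "(nat \<Rightarrow> vec) \<Rightarrow> (vec \<Rightarrow> vec) \<Rightarrow> complex" where
  "op_trace u T = (\<Sum>n. ip (u n) (T (u n)))"

end

theory Submission
  imports Defs
begin

lemma l2_zero: "(\<lambda>_. 0) \<in> l2" by (simp add: l2_def)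

lemma l2_add: assumes "x \<in> l2" "y \<in> l2" shows "(\<lambda>i. x i + y i) \<in> l2"
proof -
  have "cmod (x i + y i) ^ 2 \<le> 2 * cmod (x i) ^ 2 + 2 * cmod (y i) ^ 2" for i
  proof -
    have "cmod (x i + y i) \<le> cmod (x i) + cmod (y i)" by (rule norm_triangle_ineq)
    hence "cmod (x i + y i) ^ 2 \<le> (cmod (x i) + cmod (y i))^2"
      by (simp add: power_mono)
    also have "\<dots> \<le> 2 * cmod (x i) ^ 2 + 2 * cmod (y i) ^ 2"
      using zero_le_power2[of "cmod (x i) - cmod (y i)"] unfolding power2_sum power2_diff by linarith
    finally show ?thesis .
  qed
  moreover have "summable (\<lambda>i. 2 * cmod (x i) ^ 2 + 2 * cmod (y i) ^ 2)"
    using assms by (intro summable_add summable_mult) (auto simp: l2_def)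
  ultimately show ?thesis unfolding l2_def
    by (auto intro!: summable_comparison_test[where g="\<lambda>i. 2 * cmod (x i) ^ 2 + 2 * cmod (y i) ^ 2"])
qed

lemma l2_scale: assumes "x \<in> l2" shows "(\<lambda>i. a * x i) \<in> l2"
proof -
  have "summable (\<lambda>i. cmod a ^2 * cmod (x i) ^ 2)" using assms by (intro summable_mult) (auto simp: l2_def)
  thus ?thesis by (simp add: l2_def norm_mult power_mult_distrib)
qed

lemma l2_minus: assumes "x \<in> l2" "y \<in> l2" shows "(\<lambda>i. x i - y i) \<in> l2"
  using l2_add[OF assms(1) l2_scale[OF assms(2), of "-1"]] by simp

lemma l2_uminus: assumes "x \<in> l2" shows "(\<lambda>i. - x i) \<in> l2"
  using l2_scale[OF assms, of "-1"] by simp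

lemma ip_summable: assumes "x \<in> l2" "y \<in> l2" shows "summable (\<lambda>n. cnj (x n) * y n)"
proof (rule summable_comparison_test)
  show "\<exists>N. \<forall>n\<ge>N. norm (cnj (x n) * y n) \<le> (cmod (x n) ^ 2 + cmod (y n) ^ 2) / 2"
  proof (intro exI allI impI)
    fix n
    have "0 \<le> (cmod (x n) - cmod (y n))^2" by simp
    thus "norm (cnj (x n) * y n) \<le> (cmod (x n) ^ 2 + cmod (y n) ^ 2) / 2"
      by (simp add: norm_mult power2_eq_square algebra_simps)
  qed
  show "summable (\<lambda>n. (cmod (x n) ^ 2 + cmod (y n) ^ 2) / 2)"
    using assms by (intro summable_divide summable_add) (auto simp: l2_def)
qed

lemma ip_self: assumes "x \<in> l2" shows "ip x x = of_real (\<Sum>n. cmod (x n) ^ 2)"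
proof -
  have "(\<lambda>n. cmod (x n) ^ 2) sums (\<Sum>n. cmod (x n) ^ 2)" using assms by (auto simp: l2_def)
  hence "(\<lambda>n. complex_of_real (cmod (x n) ^ 2)) sums of_real (\<Sum>n. cmod (x n) ^ 2)"
    by (subst sums_of_real_iff)
  moreover have "complex_of_real (cmod (x n) ^ 2) = cnj (x n) * x n" for n
    using complex_norm_square[of "x n"] by (simp only: mult.commute)
  ultimately show ?thesis unfolding ip_def by (simp add: sums_iff)
qed

lemma ip_add_left: assumes "x \<in> l2" "y \<in> l2" "z \<in> l2"
  shows "ip (\<lambda>i. x i + y i) z = ip x z + ip y z"
  unfolding ip_def using ip_summable[OF assms(1,3)] ip_summable[OF assms(2,3)]
  by (simp add: distrib_right suminf_add)

lemma ip_add_right: assumes "x \<in> l2" "y \<in> l2" "z \<in> l2"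
  shows "ip z (\<lambda>i. x i + y i) = ip z x + ip z y"
  unfolding ip_def using ip_summable[OF assms(3,1)] ip_summable[OF assms(3,2)]
  by (simp add: distrib_left suminf_add)

lemma ip_scale_right: assumes "x \<in> l2" "y \<in> l2"
  shows "ip x (\<lambda>i. a * y i) = a * ip x y"
  unfolding ip_def using summable_mult[OF ip_summable[OF assms], of a]
  by (subst suminf_mult[OF ip_summable[OF assms], symmetric]) (simp add: algebra_simps)

lemma ip_cnj: assumes "x \<in> l2" "y \<in> l2" shows "ip y x = cnj (ip x y)"
proof -
  have "(\<lambda>n. cnj (x n) * y n) sums ip x y" unfolding ip_def using ip_summable[OF assms] by auto
  hence "(\<lambda>n. cnj (cnj (x n) * y n)) sums cnj (ip x y)" by (subst sums_cnj)
  thus ?thesis unfolding ip_def by (simp add: sums_iff mult.commute)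
qed

lemma ip_scale_left: assumes "x \<in> l2" "y \<in> l2"
  shows "ip (\<lambda>i. a * x i) y = cnj a * ip x y"
  using ip_cnj[OF assms(2) l2_scale[OF assms(1)], of a] ip_scale_right[OF assms(2,1), of a] ip_cnj[OF assms(2,1)]
  by simp

typedef hv = l2 morphisms vr va using l2_zero by blast

lemmas vr' = vr[simplified]
declare vr_inverse[simp] va_inverse[simplified, simp]

instantiation hv :: real_inner
begin
definition zero_hv :: hv where "zero_hv = va (\<lambda>_. 0)"
definition plus_hv :: "hv \<Rightarrow> hv \<Rightarrow> hv" where "plus_hv x y = va (\<lambda>i. vr x i + vr y i)"
definition minus_hv :: "hv \<Rightarrow> hv \<Rightarrow> hv" where "minus_hv x y = va (\<lambda>i. vr x i - vr y i)"
definition uminus_hv :: "hv \<Rightarrow> hv" where "uminus_hv x = va (\<lambda>i. - vr x i)"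
definition scaleR_hv :: "real \<Rightarrow> hv \<Rightarrow> hv" where "scaleR_hv r x = va (\<lambda>i. complex_of_real r * vr x i)"
definition inner_hv :: "hv \<Rightarrow> hv \<Rightarrow> real" where "inner_hv x y = Re (ip (vr x) (vr y))"
definition norm_hv :: "hv \<Rightarrow> real" where "norm_hv x = sqrt (inner x x)"
definition sgn_hv :: "hv \<Rightarrow> hv" where "sgn_hv x = scaleR (inverse (norm x)) x"
definition dist_hv :: "hv \<Rightarrow> hv \<Rightarrow> real" where "dist_hv x y = norm (x - y)"
definition uniformity_hv :: "(hv \<times> hv) filter" where "uniformity_hv = (INF e\<in>{0<..}. principal {(x, y). dist x y < e})"
definition open_hv :: "hv set \<Rightarrow> bool" where "open_hv U = (\<forall>x\<in>U. eventually (\<lambda>(x', y). x' = x \<longrightarrow> y \<in> U) uniformity)"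
instance
proof
  show "(a + b) + c = a + (b + c)" for a b c :: hv
    by (simp add: plus_hv_def l2_add vr' add.assoc)
  show "a + b = b + a" for a b :: hv by (simp add: plus_hv_def add.commute)
  show "0 + a = a" for a :: hv by (simp add: plus_hv_def zero_hv_def l2_zero vr_inverse)
  show "- a + a = 0" for a :: hv by (simp add: plus_hv_def zero_hv_def uminus_hv_def l2_uminus vr')
  show "a - b = a + - b" for a b :: hv by (simp add: plus_hv_def minus_hv_def uminus_hv_def l2_uminus vr')
  show "a *\<^sub>R (x + y) = a *\<^sub>R x + a *\<^sub>R y" for a and x y :: hv
    by (simp add: plus_hv_def scaleR_hv_def l2_add l2_scale vr' algebra_simps)
  show "(a + b) *\<^sub>R x = a *\<^sub>R x + b *\<^sub>R x" for a b and x :: hv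
    by (simp add: plus_hv_def scaleR_hv_def l2_add l2_scale vr' algebra_simps)
  show "a *\<^sub>R b *\<^sub>R x = (a * b) *\<^sub>R x" for a b and x :: hv
    by (simp add: scaleR_hv_def l2_scale vr' algebra_simps)
  show "1 *\<^sub>R x = x" for x :: hv by (simp add: scaleR_hv_def vr_inverse)
  show "sgn x = inverse (norm x) *\<^sub>R x" for x :: hv by (simp add: sgn_hv_def)
  show "dist x y = norm (x - y)" for x y :: hv by (simp add: dist_hv_def)
  show "uniformity = (INF e\<in>{0<..}. principal {(x::hv, y). dist x y < e})" by (simp add: uniformity_hv_def)
  show "open U = (\<forall>x\<in>U. \<forall>\<^sub>F (x', y) in uniformity. x' = x \<longrightarrow> y \<in> U)" for U :: "hv set" by (simp add: open_hv_def)
  show "inner x y = inner y x" for x y :: hv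
    unfolding inner_hv_def using ip_cnj[OF vr'[of x] vr'[of y]] by simp
  show "inner (x + y) z = inner x z + inner y z" for x y z :: hv
    by (simp add: inner_hv_def plus_hv_def l2_add vr' ip_add_left)
  show "inner (r *\<^sub>R x) y = r * inner x y" for r and x y :: hv
    by (simp add: inner_hv_def scaleR_hv_def l2_scale vr' ip_scale_left)
  show "0 \<le> inner x x" for x :: hv
  proof -
    have sm: "summable (\<lambda>n. cmod (vr x n) ^ 2)" using vr'[of x] l2_def by auto
    show ?thesis by (simp add: inner_hv_def ip_self[OF vr'] suminf_nonneg[OF sm])
  qed
  show "(inner x x = 0) = (x = 0)" for x :: hv
  proof
    assume "inner x x = 0"
    hence s: "(\<Sum>n. cmod (vr x n) ^ 2) = 0" by (simp add: inner_hv_def ip_self[OF vr'])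
    have sm: "summable (\<lambda>n. cmod (vr x n) ^ 2)" using vr'[of x] l2_def by auto
    have "\<forall>n. cmod (vr x n) ^ 2 = 0" using suminf_eq_zero_iff[OF sm] s by simp
    hence "vr x = (\<lambda>_. 0)" by auto
    thus "x = 0" unfolding zero_hv_def by (metis vr_inverse)
  next
    assume "x = 0" thus "inner x x = 0"
      by (simp add: inner_hv_def zero_hv_def l2_zero ip_def)
  qed
  show "norm x = sqrt (inner x x)" for x :: hv by (simp add: norm_hv_def)
qed
end



lemma vr_in: "vr x \<in> l2" using vr by simp

lemma vr_add: "vr (x + y) = (\<lambda>i. vr x i + vr y i)"
  by (simp add: plus_hv_def l2_add vr_in)
lemma vr_diff: "vr (x - y) = (\<lambda>i. vr x i - vr y i)"
  by (simp add: minus_hv_def l2_minus vr_in)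
lemma vr_uminus: "vr (- x) = (\<lambda>i. - vr x i)"
  by (simp add: uminus_hv_def l2_uminus vr_in)
lemma vr_zero: "vr 0 = (\<lambda>_. 0)"
  by (simp add: zero_hv_def l2_zero)
lemma vr_scaleR: "vr (r *\<^sub>R x) = (\<lambda>i. complex_of_real r * vr x i)"
  by (simp add: scaleR_hv_def l2_scale vr_in)

definition cs :: "complex \<Rightarrow> hv \<Rightarrow> hv" where "cs a x = va (\<lambda>i. a * vr x i)"
definition cip :: "hv \<Rightarrow> hv \<Rightarrow> complex" where "cip x y = ip (vr x) (vr y)"

lemma vr_cs: "vr (cs a x) = (\<lambda>i. a * vr x i)"
  by (simp add: cs_def l2_scale vr_in)

lemma vr_inj: "vr x = vr y \<Longrightarrow> x = y" by (metis vr_inverse)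

lemma hv_eqI: assumes "\<And>i. vr x i = vr y i" shows "x = y"
  using assms by (intro vr_inj ext) auto

lemma cs_add: "cs a (x + y) = cs a x + cs a y"
  by (rule hv_eqI) (simp add: vr_cs vr_add algebra_simps)
lemma cs_add_left: "cs (a + b) x = cs a x + cs b x"
  by (rule hv_eqI) (simp add: vr_cs vr_add algebra_simps)
lemma cs_diff: "cs a (x - y) = cs a x - cs a y"
  by (rule hv_eqI) (simp add: vr_cs vr_diff algebra_simps)
lemma cs_cs: "cs a (cs b x) = cs (a * b) x"
  by (rule hv_eqI) (simp add: vr_cs algebra_simps)
lemma cs_one[simp]: "cs 1 x = x"
  by (rule hv_eqI) (simp add: vr_cs)
lemma cs_zero[simp]: "cs 0 x = 0"
  by (rule hv_eqI) (simp add: vr_cs vr_zero)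
lemma cs_zero_right[simp]: "cs a 0 = 0"
  by (rule hv_eqI) (simp add: vr_cs vr_zero)
lemma scaleR_cs: "r *\<^sub>R x = cs (complex_of_real r) x"
  by (rule hv_eqI) (simp add: vr_cs vr_scaleR)
lemma cs_scaleR: "cs (r *\<^sub>R a) x = r *\<^sub>R cs a x"
  by (rule hv_eqI) (simp add: vr_cs vr_scaleR scaleR_conv_of_real)
lemma cs_scaleR_right: "cs a (r *\<^sub>R x) = r *\<^sub>R cs a x"
  by (rule hv_eqI) (simp add: vr_cs vr_scaleR)
lemma cs_sum: "cs a (sum f F) = (\<Sum>i\<in>F. cs a (f i))"
  by (induction F rule: infinite_finite_induct) (auto simp: cs_add)
lemma cs_minus_left: "cs (- a) x = - cs a x"
  by (rule hv_eqI) (simp add: vr_cs vr_uminus)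

lemma cip_add_left: "cip (x + y) z = cip x z + cip y z"
  by (simp add: cip_def vr_add ip_add_left vr_in)
lemma cip_add_right: "cip z (x + y) = cip z x + cip z y"
  by (simp add: cip_def vr_add ip_add_right vr_in)
lemma cip_cs_left: "cip (cs a x) y = cnj a * cip x y"
  by (simp add: cip_def vr_cs ip_scale_left vr_in)
lemma cip_cs_right: "cip x (cs a y) = a * cip x y"
  by (simp add: cip_def vr_cs ip_scale_right vr_in)
lemma cip_cnj: "cip y x = cnj (cip x y)"
  unfolding cip_def by (rule ip_cnj[OF vr_in vr_in])
lemma cip_zero_left[simp]: "cip 0 x = 0"
  using cip_cs_left[of 0 0 x] by simp
lemma cip_zero_right[simp]: "cip x 0 = 0"
  using cip_cs_right[of x 0 0] by simp
lemma cip_diff_left: "cip (x - y) z = cip x z - cip y z"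
  using cip_add_left[of "x - y" y z] by simp
lemma cip_diff_right: "cip z (x - y) = cip z x - cip z y"
  using cip_add_right[of z "x - y" y] by simp
lemma cip_uminus_left: "cip (- x) z = - cip x z"
  using cip_cs_left[of "-1" x z] cs_minus_left[of 1 x] by simp
lemma cip_uminus_right: "cip z (- x) = - cip z x"
  using cip_cs_right[of z "-1" x] cs_minus_left[of 1 x] by simp
lemma cip_sum_left: "cip (sum f F) z = (\<Sum>i\<in>F. cip (f i) z)"
  by (induction F rule: infinite_finite_induct) (auto simp: cip_add_left)
lemma cip_sum_right: "cip z (sum f F) = (\<Sum>i\<in>F. cip z (f i))"
  by (induction F rule: infinite_finite_induct) (auto simp: cip_add_right)
lemma cip_scaleR_left: "cip (r *\<^sub>R x) y = r *\<^sub>R cip x y"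
  by (simp add: scaleR_cs cip_cs_left scaleR_conv_of_real)
lemma cip_scaleR_right: "cip x (r *\<^sub>R y) = r *\<^sub>R cip x y"
  by (simp add: scaleR_cs cip_cs_right scaleR_conv_of_real)

lemma inner_cip: "inner x y = Re (cip x y)" by (simp add: inner_hv_def cip_def)

lemma norm_sq_sum: "norm x ^ 2 = (\<Sum>n. cmod (vr x n) ^ 2)"
proof -
  have sm: "summable (\<lambda>n. cmod (vr x n) ^ 2)" using vr_in[of x] l2_def by auto
  have "norm x ^ 2 = inner x x" by (simp add: norm_eq_sqrt_inner)
  also have "\<dots> = (\<Sum>n. cmod (vr x n) ^ 2)" by (simp add: inner_hv_def ip_self[OF vr_in])
  finally show ?thesis .
qed

lemma cip_self: "cip x x = complex_of_real (norm x ^ 2)"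
  by (simp add: cip_def ip_self[OF vr_in] norm_sq_sum)

lemma norm_l2norm: "norm x = l2norm (vr x)"
  by (simp add: l2norm_def norm_eq_sqrt_inner inner_hv_def ip_self[OF vr_in])

lemma norm_cs: "norm (cs a x) = cmod a * norm x"
proof -
  have sm: "summable (\<lambda>n. cmod (vr x n) ^ 2)" using vr_in[of x] l2_def by auto
  have "norm (cs a x) ^ 2 = (\<Sum>n. cmod a ^ 2 * cmod (vr x n) ^ 2)"
    by (simp add: norm_sq_sum vr_cs norm_mult power_mult_distrib)
  also have "\<dots> = cmod a ^ 2 * norm x ^ 2" by (simp add: suminf_mult[OF sm] norm_sq_sum)
  also have "\<dots> = (cmod a * norm x) ^ 2" by (simp add: power_mult_distrib)
  finally show ?thesis by (simp add: power2_eq_iff_nonneg)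
qed

lemma cauchy_schwarz: "cmod (cip x y) \<le> norm x * norm y"
proof (cases "cip x y = 0")
  case True thus ?thesis by simp
next
  case False
  define w where "w = cnj (cip x y) / complex_of_real (cmod (cip x y))"
  have cw: "cmod w = 1" using False by (simp add: w_def norm_divide)
  have "w * cip x y = cnj (cip x y) * cip x y / complex_of_real (cmod (cip x y))"
    by (simp add: w_def)
  also have "\<dots> = complex_of_real (cmod (cip x y) ^ 2) / complex_of_real (cmod (cip x y))"
    by (simp only: complex_norm_square mult.commute)
  also have "\<dots> = complex_of_real (cmod (cip x y))"
    using False by (simp add: power2_eq_square)
  finally have "w * cip x y = complex_of_real (cmod (cip x y))" .
  hence "cmod (cip x y) = Re (cip x (cs w y))" by (simp add: cip_cs_right)
  also have "\<dots> = inner x (cs w y)" by (simp add: inner_cip)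
  also have "\<dots> \<le> norm x * norm (cs w y)" by (rule Cauchy_Schwarz_ineq2[THEN order_trans[OF abs_ge_self]])
  also have "\<dots> = norm x * norm y" by (simp add: norm_cs cw)
  finally show ?thesis .
qed

lemma bounded_bilinear_cip: "bounded_bilinear cip"
  by (rule bounded_bilinear.intro)
    (auto simp: cip_add_left cip_add_right cip_scaleR_left cip_scaleR_right
      intro!: exI[of _ 1] cauchy_schwarz)

lemma bounded_bilinear_cs: "bounded_bilinear cs"
  by (rule bounded_bilinear.intro)
    (auto simp: cs_add cs_add_left cs_scaleR cs_scaleR_right norm_cs intro!: exI[of _ 1])

lemma pointwise_le: "cmod (vr x i) \<le> norm x"
proof -
  have sm: "summable (\<lambda>n. cmod (vr x n) ^ 2)" using vr_in[of x] l2_def by auto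
  have "cmod (vr x i) ^ 2 \<le> (\<Sum>n. cmod (vr x n) ^ 2)"
    using sum_le_suminf[OF sm, of "{i}"] by simp
  hence "cmod (vr x i) ^ 2 \<le> norm x ^ 2" by (simp add: norm_sq_sum)
  thus ?thesis by (simp add: power2_le_iff_abs_le)
qed

lemma partial_le: "(\<Sum>i<I. cmod (vr x i) ^ 2) \<le> norm x ^ 2"
proof -
  have sm: "summable (\<lambda>n. cmod (vr x n) ^ 2)" using vr_in[of x] l2_def by auto
  show ?thesis using sum_le_suminf[OF sm, of "{..<I}"] by (simp add: norm_sq_sum)
qed

instance hv :: banach
proof
  fix X :: "nat \<Rightarrow> hv"
  assume C: "Cauchy X"
  have pc: "Cauchy (\<lambda>n. vr (X n) i)" for i
  proof (rule CauchyI)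
    fix e :: real assume "0 < e"
    then obtain M where M: "\<forall>m\<ge>M. \<forall>n\<ge>M. norm (X m - X n) < e" using CauchyD[OF C] by blast
    show "\<exists>M. \<forall>m\<ge>M. \<forall>n\<ge>M. norm (vr (X m) i - vr (X n) i) < e"
    proof (intro exI allI impI)
      fix m n assume "M \<le> m" "M \<le> n"
      have "norm (vr (X m) i - vr (X n) i) = cmod (vr (X m - X n) i)" by (simp add: vr_diff)
      also have "\<dots> \<le> norm (X m - X n)" by (rule pointwise_le)
      also have "\<dots> < e" using M \<open>M \<le> m\<close> \<open>M \<le> n\<close> by auto
      finally show "norm (vr (X m) i - vr (X n) i) < e" .
    qed
  qed
  define z where "z i = lim (\<lambda>n. vr (X n) i)" for i
  have zl: "(\<lambda>n. vr (X n) i) \<longlonglongrightarrow> z i" for i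
    unfolding z_def using pc[of i] by (simp add: Cauchy_convergent_iff convergent_LIMSEQ_iff)
  have key: "\<exists>M. \<forall>m\<ge>M. (\<lambda>i. vr (X m) i - z i) \<in> l2 \<and> (\<Sum>i. cmod (vr (X m) i - z i) ^ 2) \<le> e^2"
    if e: "0 < e" for e
  proof -
    obtain M where M: "\<forall>m\<ge>M. \<forall>n\<ge>M. norm (X m - X n) < e" using CauchyD[OF C e] by blast
    have part: "(\<Sum>i<I. cmod (vr (X m) i - z i) ^ 2) \<le> e^2" if "m \<ge> M" for m I
    proof -
      have lim: "(\<lambda>n. \<Sum>i<I. cmod (vr (X m) i - vr (X n) i) ^ 2) \<longlonglongrightarrow> (\<Sum>i<I. cmod (vr (X m) i - z i) ^ 2)"
        by (intro tendsto_sum tendsto_power tendsto_norm tendsto_diff tendsto_const zl)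
      show ?thesis
      proof (rule LIMSEQ_le_const2[OF lim], intro exI allI impI)
        fix n assume "n \<ge> M"
        have "(\<Sum>i<I. cmod (vr (X m) i - vr (X n) i) ^ 2) = (\<Sum>i<I. cmod (vr (X m - X n) i) ^ 2)"
          by (simp add: vr_diff)
        also have "\<dots> \<le> norm (X m - X n) ^ 2" by (rule partial_le)
        also have "\<dots> \<le> e ^ 2" using M \<open>n \<ge> M\<close> \<open>m \<ge> M\<close>
          by (intro power_mono) (auto intro: less_imp_le)
        finally show "(\<Sum>i<I. cmod (vr (X m) i - vr (X n) i) ^ 2) \<le> e^2" .
      qed
    qed
    show ?thesis
    proof (intro exI allI impI conjI)
      fix m assume m: "m \<ge> M"
      have sm: "summable (\<lambda>i. cmod (vr (X m) i - z i) ^ 2)"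
        by (rule summableI_nonneg_bounded[where x="e^2"]) (use part[OF m] in auto)
      thus "(\<lambda>i. vr (X m) i - z i) \<in> l2" by (simp add: l2_def)
      show "(\<Sum>i. cmod (vr (X m) i - z i) ^ 2) \<le> e^2"
        by (rule suminf_le_const[OF sm part[OF m]])
    qed
  qed
  obtain M1 where M1: "\<forall>m\<ge>M1. (\<lambda>i. vr (X m) i - z i) \<in> l2" using key[of 1] by auto
  have zin: "z \<in> l2"
  proof -
    have "(\<lambda>i. vr (X M1) i - z i) \<in> l2" using M1 by auto
    from l2_minus[OF vr_in this] have "(\<lambda>i. vr (X M1) i - (vr (X M1) i - z i)) \<in> l2" .
    thus ?thesis by simp
  qed
  have "X \<longlonglongrightarrow> va z"
  proof (rule LIMSEQ_I)
    fix r :: real assume r: "0 < r"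
    obtain M where M: "\<forall>m\<ge>M. (\<lambda>i. vr (X m) i - z i) \<in> l2 \<and> (\<Sum>i. cmod (vr (X m) i - z i) ^ 2) \<le> (r/2)^2"
      using key[of "r/2"] r by auto
    show "\<exists>no. \<forall>n\<ge>no. norm (X n - va z) < r"
    proof (intro exI allI impI)
      fix n assume n: "n \<ge> M"
      have "norm (X n - va z) ^ 2 = (\<Sum>i. cmod (vr (X n) i - z i) ^ 2)"
        by (simp add: norm_sq_sum vr_diff zin)
      also have "\<dots> \<le> (r/2)^2" using M n by auto
      finally have "norm (X n - va z) \<le> r/2"
        using r by (simp add: power2_le_iff_abs_le)
      thus "norm (X n - va z) < r" using r by simp
    qed
  qed
  thus "convergent X" by (auto simp: convergent_def)
qed



lemma bl_cip_right: "bounded_linear (cip z)"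
  using bounded_bilinear.bounded_linear_right[OF bounded_bilinear_cip] .
lemma bl_cip_left: "bounded_linear (\<lambda>x. cip x z)"
  using bounded_bilinear.bounded_linear_left[OF bounded_bilinear_cip] .
lemma bl_cs_right: "bounded_linear (cs a)"
  using bounded_bilinear.bounded_linear_right[OF bounded_bilinear_cs] .

lemma sums_cip_right: "f sums s \<Longrightarrow> (\<lambda>n. cip z (f n)) sums cip z s"
  by (rule bounded_linear.sums[OF bl_cip_right])
lemma sums_cip_left: "f sums s \<Longrightarrow> (\<lambda>n. cip (f n) z) sums cip s z"
  by (rule bounded_linear.sums[OF bl_cip_left])
lemma sums_cs: "f sums s \<Longrightarrow> (\<lambda>n. cs a (f n)) sums cs a s"
  by (rule bounded_linear.sums[OF bl_cs_right])

lemma cnj_mult_self: "cnj z * z = (complex_of_real (cmod z)) ^ 2"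
  using complex_norm_square[of z] by (simp add: mult.commute)
lemma mult_cnj_self: "z * cnj z = (complex_of_real (cmod z)) ^ 2"
  using complex_norm_square[of z] by simp
lemma norm_sq_Re: "norm x ^ 2 = Re (cip x x)" by (simp add: cip_self)

definition onb :: "(nat \<Rightarrow> hv) \<Rightarrow> bool" where
  "onb u \<longleftrightarrow> (\<forall>m n. cip (u m) (u n) = (if m = n then 1 else 0)) \<and> (\<forall>x. (\<forall>n. cip (u n) x = 0) \<longrightarrow> x = 0)"

lemma onb_ONB: assumes "is_ONB e" shows "onb (\<lambda>n. va (e n))"
  unfolding onb_def
proof (intro conjI allI impI)
  have el: "e n \<in> l2" for n using assms by (auto simp: is_ONB_def)
  show "cip (va (e m)) (va (e n)) = (if m = n then 1 else 0)" for m n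
    using assms el by (simp add: cip_def is_ONB_def)
  fix x assume "\<forall>n. cip (va (e n)) x = 0"
  hence "vr x = (\<lambda>_. 0)" using assms el vr_in[of x] by (simp add: cip_def is_ONB_def)
  thus "x = 0" by (intro vr_inj) (simp add: vr_zero)
qed

context
  fixes u :: "nat \<Rightarrow> hv"
  assumes u: "onb u"
begin

lemma on: "cip (u m) (u n) = (if m = n then 1 else 0)" using u by (simp add: onb_def)
lemma complete: "(\<And>n. cip (u n) x = 0) \<Longrightarrow> x = 0" using u by (simp add: onb_def)

lemma cip_fin: "finite F \<Longrightarrow> cip (u k) (\<Sum>n\<in>F. cs (a n) (u n)) = (if k \<in> F then a k else 0)"
  by (simp add: cip_sum_right cip_cs_right on if_distrib cong: if_cong)

lemma cip_fin_left: "finite F \<Longrightarrow> cip (\<Sum>n\<in>F. cs (a n) (u n)) (u k) = (if k \<in> F then cnj (a k) else 0)"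
  using cip_fin[of F k a] by (subst cip_cnj) auto

lemma norm_fin: assumes "finite F" shows "norm (\<Sum>n\<in>F. cs (a n) (u n)) ^ 2 = (\<Sum>n\<in>F. cmod (a n) ^ 2)"
proof -
  have "complex_of_real (norm (\<Sum>n\<in>F. cs (a n) (u n)) ^ 2) = cip (\<Sum>n\<in>F. cs (a n) (u n)) (\<Sum>n\<in>F. cs (a n) (u n))"
    by (simp add: cip_self)
  also have "\<dots> = (\<Sum>n\<in>F. cnj (a n) * cip (u n) (\<Sum>m\<in>F. cs (a m) (u m)))"
    by (simp add: cip_sum_left cip_cs_left)
  also have "\<dots> = (\<Sum>n\<in>F. complex_of_real (cmod (a n) ^ 2))"
    using assms by (intro sum.cong) (simp_all add: cip_fin cnj_mult_self)
  finally show ?thesis by (simp only: of_real_sum[symmetric] of_real_eq_iff)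
qed

lemma bessel: "(\<Sum>n<N. cmod (cip (u n) x) ^ 2) \<le> norm x ^ 2"
proof -
  define c where "c n = cip (u n) x" for n
  define p where "p = (\<Sum>n<N. cs (c n) (u n))"
  define s where "s = (\<Sum>n<N. cmod (c n) ^ 2)"
  have px: "Re (cip p x) = s"
    by (simp add: p_def s_def cip_sum_left cip_cs_left c_def cnj_mult_self)
  have xp: "Re (cip x p) = s" using px by (subst cip_cnj) simp
  have pp: "Re (cip p p) = s"
    using norm_fin[of "{..<N}" c] by (simp add: p_def s_def norm_sq_Re)
  have "norm (x - p) ^ 2 = norm x ^ 2 - s"
    by (simp add: norm_sq_Re cip_diff_left cip_diff_right px xp pp)
  hence "0 \<le> norm x ^ 2 - s" by (metis zero_le_power2)
  thus ?thesis by (simp add: s_def c_def)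
qed

lemma bessel_summable: "summable (\<lambda>n. cmod (cip (u n) x) ^ 2)"
  by (rule summableI_nonneg_bounded[where x="norm x ^ 2"]) (use bessel in auto)

lemma series_summable: assumes "summable (\<lambda>n. cmod (a n) ^ 2)"
  shows "summable (\<lambda>n. cs (a n) (u n))"
  unfolding summable_Cauchy
proof (intro allI impI)
  fix e :: real assume e: "0 < e"
  obtain N where N: "\<forall>m\<ge>N. \<forall>n. norm (\<Sum>k\<in>{m..<n}. cmod (a k) ^ 2) < e^2"
    using assms[unfolded summable_Cauchy] e by (meson zero_less_power)
  show "\<exists>N. \<forall>m\<ge>N. \<forall>n. norm (\<Sum>k\<in>{m..<n}. cs (a k) (u k)) < e"
  proof (intro exI allI impI)
    fix m n assume "N \<le> m"
    have "norm (\<Sum>k\<in>{m..<n}. cs (a k) (u k)) ^ 2 = (\<Sum>k\<in>{m..<n}. cmod (a k) ^ 2)"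
      by (rule norm_fin) simp
    also have "\<dots> < e^2"
    proof -
      have "norm (\<Sum>k\<in>{m..<n}. cmod (a k) ^ 2) < e^2" using N \<open>N \<le> m\<close> by auto
      moreover have "0 \<le> (\<Sum>k\<in>{m..<n}. cmod (a k) ^ 2)" by (rule sum_nonneg) simp
      ultimately show ?thesis by simp
    qed
    finally show "norm (\<Sum>k\<in>{m..<n}. cs (a k) (u k)) < e"
      by (rule power_less_imp_less_base[of _ 2]) (use e in auto)
  qed
qed

lemma coeff_series: assumes "summable (\<lambda>n. cs (a n) (u n))"
  shows "cip (u k) (\<Sum>n. cs (a n) (u n)) = a k"
proof -
  have "(\<lambda>n. cip (u k) (cs (a n) (u n))) sums cip (u k) (\<Sum>n. cs (a n) (u n))"
    by (rule sums_cip_right[OF summable_sums[OF assms]])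
  moreover have "(\<lambda>n. cip (u k) (cs (a n) (u n))) = (\<lambda>n. if n = k then a n else 0)"
    by (auto simp: cip_cs_right on)
  ultimately show ?thesis using sums_single[of k a] sums_unique2 by metis
qed

lemma parseval: "(\<lambda>n. cs (cip (u n) x) (u n)) sums x"
proof -
  have sm: "summable (\<lambda>n. cs (cip (u n) x) (u n))" by (rule series_summable[OF bessel_summable])
  define y where "y = (\<Sum>n. cs (cip (u n) x) (u n))"
  have "cip (u k) (x - y) = 0" for k
    by (simp add: cip_diff_right y_def coeff_series[OF sm])
  hence "x - y = 0" by (rule complete)
  hence "x = y" by simp
  thus ?thesis using summable_sums[OF sm] by (simp add: y_def)
qed

lemma parseval_ip: "(\<lambda>n. cnj (cip (u n) x) * cip (u n) y) sums cip x y"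
proof -
  have "(\<lambda>n. cip x (cs (cip (u n) y) (u n))) sums cip x y" by (rule sums_cip_right[OF parseval])
  moreover have "cip x (cs (cip (u n) y) (u n)) = cnj (cip (u n) x) * cip (u n) y" for n
    by (simp add: cip_cs_right) (subst cip_cnj, simp)
  ultimately show ?thesis by simp
qed

lemma parseval_norm: "(\<lambda>n. cmod (cip (u n) x) ^ 2) sums (norm x ^ 2)"
proof -
  have "(\<lambda>n. complex_of_real (cmod (cip (u n) x) ^ 2)) sums complex_of_real (norm x ^ 2)"
    using parseval_ip[of x x] unfolding cip_self cnj_mult_self by simp
  thus ?thesis by (simp only: sums_of_real_iff)
qed

end



definition col :: "(nat \<Rightarrow> hv) \<Rightarrow> (nat \<Rightarrow> nat \<Rightarrow> complex) \<Rightarrow> nat \<Rightarrow> hv" where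
  "col v k n = (\<Sum>m. cs (k n m) (v m))"

definition Op :: "(nat \<Rightarrow> hv) \<Rightarrow> (nat \<Rightarrow> hv) \<Rightarrow> (nat \<Rightarrow> nat \<Rightarrow> complex) \<Rightarrow> hv \<Rightarrow> hv" where
  "Op u v k x = (\<Sum>n. cs (cip (u n) x) (col v k n))"

definition KB :: "(nat \<Rightarrow> nat \<Rightarrow> complex) \<Rightarrow> bool" where
  "KB k \<longleftrightarrow> (\<forall>c N M. (\<Sum>m<M. cmod (\<Sum>n<N. c n * k n m) ^ 2) \<le> (\<Sum>n<N. cmod (c n) ^ 2))"

lemma KB_fin: assumes "KB k" "finite F"
  shows "(\<Sum>m<M. cmod (\<Sum>n\<in>F. c n * k n m) ^ 2) \<le> (\<Sum>n\<in>F. cmod (c n) ^ 2)"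
proof -
  obtain N where N: "F \<subseteq> {..<N}"
    using assms(2) by (meson finite_nat_iff_bounded subset_eq lessThan_iff)
  define c' where "c' n = (if n \<in> F then c n else 0)" for n
  have e1: "(\<Sum>n<N. c' n * k n m) = (\<Sum>n\<in>F. c n * k n m)" for m
  proof -
    have "(\<Sum>n<N. c' n * k n m) = (\<Sum>n\<in>F. c' n * k n m)"
      by (rule sum.mono_neutral_right) (use N in \<open>auto simp: c'_def\<close>)
    also have "\<dots> = (\<Sum>n\<in>F. c n * k n m)" by (rule sum.cong) (auto simp: c'_def)
    finally show ?thesis .
  qed
  have e2: "(\<Sum>n<N. cmod (c' n) ^ 2) = (\<Sum>n\<in>F. cmod (c n) ^ 2)"
  proof -
    have "(\<Sum>n<N. cmod (c' n) ^ 2) = (\<Sum>n\<in>F. cmod (c' n) ^ 2)"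
      by (rule sum.mono_neutral_right) (use N in \<open>auto simp: c'_def\<close>)
    also have "\<dots> = (\<Sum>n\<in>F. cmod (c n) ^ 2)" by (rule sum.cong) (auto simp: c'_def)
    finally show ?thesis .
  qed
  show ?thesis using assms(1)[unfolded KB_def, rule_format, of c' N M] by (simp add: e1 e2)
qed

context
  fixes u v :: "nat \<Rightarrow> hv" and k :: "nat \<Rightarrow> nat \<Rightarrow> complex"
  assumes u: "onb u" and v: "onb v" and kb: "KB k"
begin

lemma row_bound: "(\<Sum>m<M. cmod (k n m) ^ 2) \<le> 1"
proof -
  have "(\<Sum>m<M. cmod (\<Sum>j\<in>{n}. 1 * k j m) ^ 2) \<le> (\<Sum>j\<in>{n}. cmod (1::complex) ^ 2)"
    by (rule KB_fin[OF kb]) simp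
  thus ?thesis by simp
qed

lemma row_summable: "summable (\<lambda>m. cmod (k n m) ^ 2)"
  by (rule summableI_nonneg_bounded[where x=1]) (use row_bound in auto)

lemma col_summable: "summable (\<lambda>m. cs (k n m) (v m))"
  by (rule series_summable[OF v row_summable])

lemma cip_col: "cip (v m) (col v k n) = k n m"
  unfolding col_def by (rule coeff_series[OF v col_summable])

lemma col_cip_sums: "(\<lambda>m. cnj (k n m) * cip (v m) y) sums cip (col v k n) y"
proof -
  have "(\<lambda>m. cip (cs (k n m) (v m)) y) sums cip (col v k n) y"
    unfolding col_def by (rule sums_cip_left[OF summable_sums[OF col_summable]])
  thus ?thesis by (simp add: cip_cs_left)
qed

lemma fin_col_coeff: "cip (v m) (\<Sum>n\<in>F. cs (c n) (col v k n)) = (\<Sum>n\<in>F. c n * k n m)"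
  by (simp add: cip_sum_right cip_cs_right cip_col)

lemma fin_col_norm: assumes "finite F"
  shows "norm (\<Sum>n\<in>F. cs (c n) (col v k n)) ^ 2 \<le> (\<Sum>n\<in>F. cmod (c n) ^ 2)"
proof -
  let ?y = "\<Sum>n\<in>F. cs (c n) (col v k n)"
  have "(\<lambda>m. cmod (cip (v m) ?y) ^ 2) sums (norm ?y ^ 2)" by (rule parseval_norm[OF v])
  hence sm: "summable (\<lambda>m. cmod (\<Sum>n\<in>F. c n * k n m) ^ 2)"
    and eq: "norm ?y ^ 2 = (\<Sum>m. cmod (\<Sum>n\<in>F. c n * k n m) ^ 2)"
    by (simp_all add: fin_col_coeff sums_iff)
  note eq
  also have "\<dots> \<le> (\<Sum>n\<in>F. cmod (c n) ^ 2)"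
    by (rule suminf_le_const[OF sm]) (rule KB_fin[OF kb assms])
  finally show ?thesis .
qed

lemma Op_summable: "summable (\<lambda>n. cs (cip (u n) x) (col v k n))"
  unfolding summable_Cauchy
proof (intro allI impI)
  fix e :: real assume e: "0 < e"
  have bs: "summable (\<lambda>n. cmod (cip (u n) x) ^ 2)" by (rule bessel_summable[OF u])
  obtain N where N: "\<forall>m\<ge>N. \<forall>n. norm (\<Sum>k\<in>{m..<n}. cmod (cip (u k) x) ^ 2) < e^2"
    using bs[unfolded summable_Cauchy] e by (meson zero_less_power)
  show "\<exists>N. \<forall>m\<ge>N. \<forall>n. norm (\<Sum>j\<in>{m..<n}. cs (cip (u j) x) (col v k j)) < e"
  proof (intro exI allI impI)
    fix m n assume "N \<le> m"
    have "norm (\<Sum>j\<in>{m..<n}. cs (cip (u j) x) (col v k j)) ^ 2 \<le> (\<Sum>j\<in>{m..<n}. cmod (cip (u j) x) ^ 2)"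
      by (rule fin_col_norm) simp
    also have "\<dots> < e^2"
    proof -
      have "norm (\<Sum>j\<in>{m..<n}. cmod (cip (u j) x) ^ 2) < e^2" using N \<open>N \<le> m\<close> by auto
      moreover have "0 \<le> (\<Sum>j\<in>{m..<n}. cmod (cip (u j) x) ^ 2)" by (rule sum_nonneg) simp
      ultimately show ?thesis by simp
    qed
    finally show "norm (\<Sum>j\<in>{m..<n}. cs (cip (u j) x) (col v k j)) < e"
      by (rule power_less_imp_less_base[of _ 2]) (use e in auto)
  qed
qed

lemma Op_sums: "(\<lambda>n. cs (cip (u n) x) (col v k n)) sums Op u v k x"
  unfolding Op_def by (rule summable_sums[OF Op_summable])

lemma Op_norm: "norm (Op u v k x) \<le> norm x"
proof -
  have lim: "(\<lambda>N. norm (\<Sum>n<N. cs (cip (u n) x) (col v k n))) \<longlonglongrightarrow> norm (Op u v k x)"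
    using Op_sums[unfolded sums_def] by (rule tendsto_norm)
  show ?thesis
  proof (rule LIMSEQ_le_const2[OF lim], intro exI allI impI)
    fix N :: nat
    have "norm (\<Sum>n<N. cs (cip (u n) x) (col v k n)) ^ 2 \<le> (\<Sum>n<N. cmod (cip (u n) x) ^ 2)"
      by (rule fin_col_norm) simp
    also have "\<dots> \<le> norm x ^ 2" by (rule bessel[OF u])
    finally show "norm (\<Sum>n<N. cs (cip (u n) x) (col v k n)) \<le> norm x"
      by (simp add: power2_le_iff_abs_le)
  qed
qed

lemma Op_coeff: "(\<lambda>n. cip (u n) x * k n m) sums cip (v m) (Op u v k x)"
  using sums_cip_right[OF Op_sums[of x], of "v m"] by (simp add: cip_cs_right cip_col)

lemma Op_cip_left: "(\<lambda>n. cnj (cip (u n) x) * cip (col v k n) y) sums cip (Op u v k x) y"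
  using sums_cip_left[OF Op_sums[of x], of y] by (simp add: cip_cs_left)

lemma Op_add: "Op u v k (x + y) = Op u v k x + Op u v k y"
proof -
  have "(\<lambda>n. cs (cip (u n) x) (col v k n) + cs (cip (u n) y) (col v k n)) sums (Op u v k x + Op u v k y)"
    by (rule sums_add[OF Op_sums Op_sums])
  hence "(\<lambda>n. cs (cip (u n) (x + y)) (col v k n)) sums (Op u v k x + Op u v k y)"
    by (simp add: cip_add_right cs_add_left)
  thus ?thesis using Op_sums sums_unique2 by blast
qed

lemma Op_cs: "Op u v k (cs a x) = cs a (Op u v k x)"
proof -
  have "(\<lambda>n. cs a (cs (cip (u n) x) (col v k n))) sums cs a (Op u v k x)"
    by (rule sums_cs[OF Op_sums])
  hence "(\<lambda>n. cs (cip (u n) (cs a x)) (col v k n)) sums cs a (Op u v k x)"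
    by (simp add: cip_cs_right cs_cs)
  thus ?thesis using Op_sums sums_unique2 by blast
qed

lemma Op_fin: assumes "finite F"
  shows "Op u v k (\<Sum>n\<in>F. cs (c n) (u n)) = (\<Sum>n\<in>F. cs (c n) (col v k n))"
proof -
  have "(\<lambda>n. cs (cip (u n) (\<Sum>j\<in>F. cs (c j) (u j))) (col v k n)) = (\<lambda>n. if n \<in> F then cs (c n) (col v k n) else 0)"
    using assms by (auto simp: cip_fin[OF u])
  hence "(\<lambda>n. cs (cip (u n) (\<Sum>j\<in>F. cs (c j) (u j))) (col v k n)) sums (\<Sum>n\<in>F. cs (c n) (col v k n))"
    using sums_If_finite_set[OF assms, of "\<lambda>n. cs (c n) (col v k n)"] by simp
  thus ?thesis using Op_sums sums_unique2 by blast
qed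

lemma dual_KB: "KB (\<lambda>m n. cnj (k n m))"
  unfolding KB_def
proof (intro allI)
  fix d :: "nat \<Rightarrow> complex" and M N :: nat
  define y where "y = (\<Sum>m<M. cs (d m) (v m))"
  define b where "b n = (\<Sum>m<M. d m * cnj (k n m))" for n
  have cy: "cip (v m) y = (if m < M then d m else 0)" for m
    by (simp add: y_def cip_fin[OF v])
  have b: "cip (col v k n) y = b n" for n
  proof -
    have "(\<lambda>m. cnj (k n m) * cip (v m) y) = (\<lambda>m. if m \<in> {..<M} then d m * cnj (k n m) else 0)"
      by (auto simp: cy)
    hence "(\<lambda>m. cnj (k n m) * cip (v m) y) sums b n"
      using sums_If_finite_set[of "{..<M}" "\<lambda>m. d m * cnj (k n m)"] by (simp add: b_def)
    thus ?thesis using col_cip_sums sums_unique2 by blast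
  qed
  define x where "x = (\<Sum>n<N. cs (b n) (u n))"
  define S where "S = (\<Sum>n<N. cmod (b n) ^ 2)"
  have Ox: "Op u v k x = (\<Sum>n<N. cs (b n) (col v k n))" by (simp add: x_def Op_fin)
  have S0: "0 \<le> S" by (simp add: S_def sum_nonneg)
  have "cip (Op u v k x) y = complex_of_real S"
    unfolding S_def of_real_sum by (simp add: Ox cip_sum_left cip_cs_left b cnj_mult_self)
  hence "S = cmod (cip (Op u v k x) y)" using S0 by simp
  also have "\<dots> \<le> norm (Op u v k x) * norm y" by (rule cauchy_schwarz)
  also have "\<dots> \<le> norm x * norm y" by (rule mult_right_mono[OF Op_norm]) simp
  also have "norm x = sqrt S" using norm_fin[OF u, of "{..<N}" b] by (simp add: x_def S_def real_sqrt_unique)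
  finally have S1: "S \<le> sqrt S * norm y" .
  have "S \<le> norm y ^ 2"
  proof (cases "S = 0")
    case True thus ?thesis by simp
  next
    case False
    hence "sqrt S > 0" using S0 by simp
    from S1 have "sqrt S * sqrt S \<le> sqrt S * norm y" using S0 by simp
    hence "sqrt S \<le> norm y" using mult_le_cancel_left_pos[OF \<open>sqrt S > 0\<close>] by blast
    hence "sqrt S ^ 2 \<le> norm y ^ 2" by (rule power_mono) (use S0 in simp)
    thus ?thesis using S0 by simp
  qed
  also have "norm y ^ 2 = (\<Sum>m<M. cmod (d m) ^ 2)" using norm_fin[OF v, of "{..<M}" d] by (simp add: y_def)
  finally show "(\<Sum>n<N. cmod (\<Sum>m<M. d m * cnj (k n m)) ^ 2) \<le> (\<Sum>m<M. cmod (d m) ^ 2)"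
    by (simp add: S_def b_def)
qed

end

lemma Op_adjoint:
  assumes u: "onb u" and v: "onb v" and kb: "KB k"
  shows "cip x (Op v u (\<lambda>m n. cnj (k n m)) y) = cip (Op u v k x) y"
proof -
  let ?A = "Op v u (\<lambda>m n. cnj (k n m)) y"
  have 1: "(\<lambda>n. cnj (cip (u n) x) * cip (u n) ?A) sums cip x ?A" by (rule parseval_ip[OF u])
  have 2: "cip (u n) ?A = cip (col v k n) y" for n
  proof -
    have "(\<lambda>m. cip (v m) y * cnj (k n m)) sums cip (u n) ?A"
      using Op_coeff[OF v u dual_KB[OF u v kb], of y n] by simp
    moreover have "(\<lambda>m. cnj (k n m) * cip (v m) y) sums cip (col v k n) y"
      by (rule col_cip_sums[OF u v kb])
    ultimately show ?thesis by (simp add: mult.commute sums_unique2)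
  qed
  have 3: "(\<lambda>n. cnj (cip (u n) x) * cip (col v k n) y) sums cip (Op u v k x) y"
    by (rule Op_cip_left[OF u v kb])
  show ?thesis using 1 3 by (simp add: 2 sums_unique2)
qed



lemma vr_sum_gen: "vr (\<Sum>n\<in>F. cs (c n) (u n)) = (\<lambda>i. \<Sum>n\<in>F. c n * vr (u n) i)"
  by (induction F rule: infinite_finite_induct) (auto simp: vr_add vr_cs vr_zero)

lemma fspan_l2: assumes "\<forall>n. u n \<in> l2" "x \<in> fspan u" shows "x \<in> l2"
proof -
  obtain c N where x: "x = (\<lambda>i. \<Sum>n<N. c n * u n i)" using assms(2) by (auto simp: fspan_def)
  have "vr (\<Sum>n<N. cs (c n) (va (u n))) = x"
    using assms(1) by (simp add: vr_sum_gen x)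
  thus ?thesis using vr_in by metis
qed

lemma fspan_basis: "u n \<in> fspan u"
proof -
  have "u n = (\<lambda>i. \<Sum>j<Suc n. (if j = n then 1 else 0) * u j i)"
    by (simp add: if_distrib cong: if_cong)
  thus ?thesis unfolding fspan_def
    by (intro CollectI exI[of _ "\<lambda>j. if j = n then 1 else 0"] exI[of _ "Suc n"])
qed

lemma fspan_zero: "(\<lambda>_. 0) \<in> fspan u"
  unfolding fspan_def by (rule CollectI, rule exI[of _ "\<lambda>_. 0"], rule exI[of _ 0]) simp

lemma fspan_comb: "(\<lambda>i. \<Sum>n<N. c n * u n i) \<in> fspan u"
  unfolding fspan_def by blast

lemma K_lin_sum:
  assumes go: "gen_op e f Kf" and g: "g \<in> fspan f"
  shows "Kf (\<lambda>i. \<Sum>n<N. c n * e n i) g = (\<Sum>n<N. c n * Kf (e n) g)"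
proof (induction N)
  case 0
  have H: "\<forall>\<phi>\<in>fspan e. \<forall>\<psi>\<in>fspan e. \<forall>g\<in>fspan f. \<forall>a b.
         Kf (\<lambda>i. a * \<phi> i + b * \<psi> i) g = a * Kf \<phi> g + b * Kf \<psi> g"
    using go unfolding gen_op_def by blast
  show ?case using H[rule_format, OF fspan_zero fspan_zero g, of 0 0] by simp
next
  case (Suc N)
  have H: "\<forall>\<phi>\<in>fspan e. \<forall>\<psi>\<in>fspan e. \<forall>g\<in>fspan f. \<forall>a b.
         Kf (\<lambda>i. a * \<phi> i + b * \<psi> i) g = a * Kf \<phi> g + b * Kf \<psi> g"
    using go unfolding gen_op_def by blast
  have "Kf (\<lambda>i. 1 * (\<Sum>n<N. c n * e n i) + c N * e N i) g = 1 * Kf (\<lambda>i. \<Sum>n<N. c n * e n i) g + c N * Kf (e N) g"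
    using H[rule_format, OF fspan_comb[where c=c and N=N and u=e] fspan_basis[of e N] g, of 1 "c N"] by simp
  thus ?case using Suc by simp
qed

lemma K_clin_sum:
  assumes go: "gen_op e f Kf" and \<phi>: "\<phi> \<in> fspan e"
  shows "Kf \<phi> (\<lambda>i. \<Sum>m<M. d m * f m i) = (\<Sum>m<M. cnj (d m) * Kf \<phi> (f m))"
proof (induction M)
  case 0
  have H: "\<forall>\<phi>\<in>fspan e. \<forall>g\<in>fspan f. \<forall>h\<in>fspan f. \<forall>a b.
         Kf \<phi> (\<lambda>i. a * g i + b * h i) = cnj a * Kf \<phi> g + cnj b * Kf \<phi> h"
    using go unfolding gen_op_def by blast
  show ?case using H[rule_format, OF \<phi> fspan_zero fspan_zero, of 0 0] by simp
next
  case (Suc M)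
  have H: "\<forall>\<phi>\<in>fspan e. \<forall>g\<in>fspan f. \<forall>h\<in>fspan f. \<forall>a b.
         Kf \<phi> (\<lambda>i. a * g i + b * h i) = cnj a * Kf \<phi> g + cnj b * Kf \<phi> h"
    using go unfolding gen_op_def by blast
  have "Kf \<phi> (\<lambda>i. 1 * (\<Sum>m<M. d m * f m i) + d M * f M i) = cnj 1 * Kf \<phi> (\<lambda>i. \<Sum>m<M. d m * f m i) + cnj (d M) * Kf \<phi> (f M)"
    using H[rule_format, OF \<phi> fspan_comb[where c=d and N=M and u=f] fspan_basis[of f M], of 1 "d M"] by simp
  thus ?case using Suc by simp
qed

lemma fspan_repr: assumes "x \<in> fspan u" "\<forall>n. u n \<in> l2"
  shows "\<exists>c N. x = vr (\<Sum>n<N. cs (c n) (va (u n))) \<and> x = (\<lambda>i. \<Sum>n<N. c n * u n i)"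
proof -
  obtain c N where x: "x = (\<lambda>i. \<Sum>n<N. c n * u n i)" using assms(1) by (auto simp: fspan_def)
  have "vr (\<Sum>n<N. cs (c n) (va (u n))) = x"
    using assms(2) by (simp add: vr_sum_gen x)
  thus ?thesis using x by metis
qed



lemma cmod_sq_has_sum_Re:
  assumes "((\<lambda>a. z a * cnj (z a)) has_sum s) A"
  shows "((\<lambda>a. cmod (z a) ^ 2) has_sum Re s) A"
  using has_sum_Re[OF assms] by (simp add: mult_cnj_self)

lemma main_ineq:
  fixes e f :: "nat \<Rightarrow> vec" and A :: "nat set"
    and K :: "nat \<Rightarrow> vec \<Rightarrow> vec \<Rightarrow> complex"
    and Q :: "(nat \<Rightarrow> nat \<Rightarrow> complex) \<Rightarrow> vec \<Rightarrow> vec \<Rightarrow> complex"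
  assumes onb_e: "is_ONB e" and onb_f: "is_ONB f"
    and Q_repr: "\<forall>\<phi>\<in>fspan e. \<forall>\<phi>'\<in>fspan e. \<forall>g\<in>fspan f. \<forall>h\<in>fspan f.
                  ((\<lambda>\<alpha>. K \<alpha> \<phi> g * cnj (K \<alpha> \<phi>' h)) has_sum Q (rank1 e \<phi> \<phi>') g h) A"
    and Q_tp: "\<forall>c. fin_supp_mat c \<longrightarrow>
                  (\<exists>T. trace_class T
                     \<and> (\<forall>g\<in>fspan f. \<forall>h\<in>fspan f. ip g (T h) = Q c g h)
                     \<and> op_trace e T = mat_trace c)"
    and \<alpha>: "\<alpha> \<in> A"
  shows "(\<Sum>m<M. cmod (K \<alpha> (\<lambda>i. \<Sum>n<N. c n * e n i) (f m)) ^ 2) \<le> (\<Sum>n<N. cmod (c n) ^ 2)"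
proof -
  define \<phi> where "\<phi> = (\<lambda>i. \<Sum>n<N. c n * e n i)"
  have \<phi>sp: "\<phi> \<in> fspan e" unfolding \<phi>_def by (rule fspan_comb)
  have el: "e n \<in> l2" for n using onb_e by (simp add: is_ONB_def)
  have fl: "f n \<in> l2" for n using onb_f by (simp add: is_ONB_def)
  define ue where "ue n = va (e n)" for n
  define uf where "uf n = va (f n)" for n
  have vue: "vr (ue n) = e n" for n by (simp add: ue_def el)
  have vuf: "vr (uf n) = f n" for n by (simp add: uf_def fl)
  have oe: "onb ue" unfolding ue_def by (rule onb_ONB[OF onb_e])
  have of: "onb uf" unfolding uf_def by (rule onb_ONB[OF onb_f])
  define x0 where "x0 = (\<Sum>n<N. cs (c n) (ue n))"
  have vx0: "vr x0 = \<phi>" by (simp add: x0_def vr_sum_gen vue \<phi>_def)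
  have ipe: "ip (e k) \<phi> = (if k < N then c k else 0)" for k
  proof -
    have "ip (e k) \<phi> = cip (ue k) x0" by (simp add: cip_def vue vx0)
    also have "\<dots> = (if k < N then c k else 0)" by (simp add: x0_def cip_fin[OF oe])
    finally show ?thesis .
  qed
  define cm where "cm = rank1 e \<phi> \<phi>"
  have cm: "cm k l = (if k < N then c k else 0) * cnj (if l < N then c l else 0)" for k l
    by (simp add: cm_def rank1_def ipe)
  have fs: "fin_supp_mat cm"
  proof -
    have "{(k, l). cm k l \<noteq> 0} \<subseteq> {..<N} \<times> {..<N}" by (auto simp: cm split: if_splits)
    thus ?thesis unfolding fin_supp_mat_def by (rule finite_subset) simp
  qed
  obtain T where tc: "trace_class T" and Tq: "\<forall>g\<in>fspan f. \<forall>h\<in>fspan f. ip g (T h) = Q cm g h"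
    and Ttr: "op_trace e T = mat_trace cm"
    using Q_tp fs by blast
  have bT: "bdd_op T" using tc by (simp add: trace_class_def)
  have Tl2: "x \<in> l2 \<Longrightarrow> T x \<in> l2" for x using bT by (simp add: bdd_op_def)
  have Tlin: "x \<in> l2 \<Longrightarrow> y \<in> l2 \<Longrightarrow> T (\<lambda>i. a * x i + b * y i) = (\<lambda>i. a * T x i + b * T y i)" for x y a b
    using bT by (simp add: bdd_op_def)
  obtain C where TC: "\<And>x. x \<in> l2 \<Longrightarrow> l2norm (T x) \<le> C * l2norm x" using bT unfolding bdd_op_def by blast
  define Th where "Th x = va (T (vr x))" for x
  have vTh: "vr (Th x) = T (vr x)" for x by (simp add: Th_def Tl2 vr_in)
  have Th_add: "Th (x + y) = Th x + Th y" for x y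
  proof (rule hv_eqI)
    fix i
    have "T (vr (x + y)) = T (\<lambda>i. 1 * vr x i + 1 * vr y i)" by (simp add: vr_add)
    also have "\<dots> = (\<lambda>i. 1 * T (vr x) i + 1 * T (vr y) i)" by (rule Tlin[OF vr_in vr_in])
    finally show "vr (Th (x + y)) i = vr (Th x + Th y) i" by (simp add: vTh vr_add)
  qed
  have Th_cs: "Th (cs a x) = cs a (Th x)" for a x
  proof (rule hv_eqI)
    fix i
    have "T (vr (cs a x)) = T (\<lambda>i. a * vr x i + 0 * vr x i)" by (simp add: vr_cs)
    also have "\<dots> = (\<lambda>i. a * T (vr x) i + 0 * T (vr x) i)" by (rule Tlin[OF vr_in vr_in])
    finally show "vr (Th (cs a x)) i = vr (cs a (Th x)) i" by (simp add: vTh vr_cs)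
  qed
  have Th_norm: "norm (Th x) \<le> norm x * C" for x
    using TC[OF vr_in[of x]] by (simp add: norm_l2norm vTh mult.commute)
  have blTh: "bounded_linear Th"
    by (rule bounded_linear_intro[OF Th_add _ Th_norm]) (simp add: scaleR_cs Th_cs)
  define q where "q x y = cip x (Th y)" for x y
  have q_add_l: "q (x + y) z = q x z + q y z" for x y z by (simp add: q_def cip_add_left)
  have q_add_r: "q z (x + y) = q z x + q z y" for x y z by (simp add: q_def cip_add_right Th_add)
  have q_diff_l: "q (x - y) z = q x z - q y z" for x y z by (simp add: q_def cip_diff_left)
  have q_diff_r: "q z (x - y) = q z x - q z y" for x y z
    using q_add_r[of z "x - y" y] by simp
  have q_cs_l: "q (cs a x) y = cnj a * q x y" for a x y by (simp add: q_def cip_cs_left)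
  have q_cs_r: "q x (cs a y) = a * q x y" for a x y by (simp add: q_def cip_cs_right Th_cs)
  have q_sum_l: "q (sum g F) y = (\<Sum>i\<in>F. q (g i) y)" for g F y by (simp add: q_def cip_sum_left)
  have q_sum_r: "q y (sum g F) = (\<Sum>i\<in>F. q y (g i))" for g F y
  proof -
    have Th0: "Th 0 = 0" using Th_cs[of 0 0] by simp
    show ?thesis
      by (induction F rule: infinite_finite_induct) (simp_all add: q_add_r, simp_all add: q_def Th0)
  qed

  have q_span: "((\<lambda>a. K a \<phi> (vr g) * cnj (K a \<phi> (vr g))) has_sum q g g) A"
    if g: "g = (\<Sum>m<M'. cs (d m) (uf m))" for g M' d
  proof -
    have vg: "vr g = (\<lambda>i. \<Sum>m<M'. d m * f m i)" by (simp add: g vr_sum_gen vuf)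
    have gsp: "vr g \<in> fspan f" unfolding vg by (rule fspan_comb)
    have "q g g = ip (vr g) (T (vr g))" by (simp add: q_def cip_def vTh)
    also have "\<dots> = Q cm (vr g) (vr g)" using Tq gsp by blast
    finally have "q g g = Q cm (vr g) (vr g)" .
    thus ?thesis using Q_repr \<phi>sp gsp by (simp add: cm_def)
  qed
  have q_span_pos: "0 \<le> Re (q g g)" if g: "g = (\<Sum>m<M'. cs (d m) (uf m))" for g M' d
    using has_sum_nonneg[OF cmod_sq_has_sum_Re[OF q_span[OF g]]] by simp
  have q_pos: "0 \<le> Re (q x x)" for x
  proof -
    define P where "P n = (\<Sum>m<n. cs (cip (uf m) x) (uf m))" for n
    have Px: "P \<longlonglongrightarrow> x" using parseval[OF of, of x] unfolding sums_def P_def .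
    have "(\<lambda>n. cip (P n) (Th (P n))) \<longlonglongrightarrow> cip x (Th x)"
      by (rule bounded_bilinear.tendsto[OF bounded_bilinear_cip Px bounded_linear.tendsto[OF blTh Px]])
    hence "(\<lambda>n. Re (q (P n) (P n))) \<longlonglongrightarrow> Re (q x x)" unfolding q_def by (rule tendsto_Re)
    thus ?thesis
    proof (rule LIMSEQ_le_const, intro exI allI impI)
      fix n :: nat
      show "0 \<le> Re (q (P n) (P n))" by (rule q_span_pos) (simp add: P_def)
    qed
  qed
  have q_lower: "cmod (K \<alpha> \<phi> (f m)) ^ 2 \<le> Re (q (uf m) (uf m))" for m
  proof -
    have "uf m = (\<Sum>j<Suc m. cs (if j = m then 1 else 0) (uf j))"
      by (simp add: if_distrib cong: if_cong)
    from cmod_sq_has_sum_Re[OF q_span[OF this]]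
    have hs: "((\<lambda>a. cmod (K a \<phi> (f m)) ^ 2) has_sum Re (q (uf m) (uf m))) A" by (simp add: vuf)
    have h1: "((\<lambda>a. cmod (K a \<phi> (f m)) ^ 2) has_sum (cmod (K \<alpha> \<phi> (f m)) ^ 2)) {\<alpha>}"
      using has_sum_finite[of "{\<alpha>}" "\<lambda>a. cmod (K a \<phi> (f m)) ^ 2"] by simp
    show ?thesis by (rule has_sum_mono_neutral[OF h1 hs]) (use \<alpha> in simp_all)
  qed
  obtain Bt where Bt: "\<forall>N u v. orthonormal_fam N u \<and> orthonormal_fam N v \<longrightarrow> (\<Sum>i<N. cmod (ip (v i) (T (u i)))) \<le> Bt"
    using tc unfolding trace_class_def by blast
  have ofe: "orthonormal_fam N' e" for N' using onb_e by (simp add: orthonormal_fam_def is_ONB_def)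
  have qe: "q (ue n) (ue n) = ip (e n) (T (e n))" for n by (simp add: q_def cip_def vTh vue)
  have sabs: "summable (\<lambda>n. cmod (q (ue n) (ue n)))"
  proof (rule summableI_nonneg_bounded[where x=Bt])
    fix n show "(\<Sum>i<n. cmod (q (ue i) (ue i))) \<le> Bt" using Bt ofe[of n] by (simp add: qe)
  qed simp
  define tr where "tr = op_trace e T"
  have trs: "(\<lambda>n. q (ue n) (ue n)) sums tr"
  proof -
    have "summable (\<lambda>n. q (ue n) (ue n))" by (rule summable_norm_cancel) (use sabs in simp)
    moreover have "tr = (\<Sum>n. q (ue n) (ue n))" by (simp add: tr_def op_trace_def qe)
    ultimately show ?thesis by (simp add: summable_sums)
  qed
  have trv: "tr = (\<Sum>k<N. c k * cnj (c k))"
  proof -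
    have "tr = infsum (\<lambda>k. cm k k) UNIV" by (simp add: tr_def Ttr mat_trace_def)
    also have "\<dots> = infsum (\<lambda>k. cm k k) {..<N}"
      by (rule infsum_cong_neutral) (auto simp: cm)
    also have "\<dots> = (\<Sum>k<N. c k * cnj (c k))" by (simp add: cm)
    finally show ?thesis .
  qed
  have Retr: "Re tr = (\<Sum>k<N. cmod (c k) ^ 2)" by (simp add: trv mult_cnj_self)
  define a where "a m n = cip (uf m) (ue n)" for m n
  define Pe where "Pe n = (\<Sum>m<M. cs (a m n) (uf m))" for n
  define S where "S = (\<Sum>m<M. q (uf m) (uf m))"
  have pe: "(\<lambda>n. cs (cip (ue n) (uf m)) (ue n)) sums uf m" for m by (rule parseval[OF oe])
  have cnja: "cip (ue n) (uf m) = cnj (a m n)" for m n unfolding a_def by (rule cip_cnj)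
  have g1: "(\<lambda>n. q (Pe n) (ue n)) sums S"
  proof -
    have "(\<lambda>n. cnj (a m n) * q (uf m) (ue n)) sums q (uf m) (uf m)" for m
      using sums_cip_right[OF bounded_linear.sums[OF blTh pe[of m]], of "uf m"]
      by (simp add: Th_cs cip_cs_right cnja q_def)
    hence "(\<lambda>n. \<Sum>m<M. cnj (a m n) * q (uf m) (ue n)) sums S"
      unfolding S_def by (rule sums_sum)
    moreover have "q (Pe n) (ue n) = (\<Sum>m<M. cnj (a m n) * q (uf m) (ue n))" for n
      by (simp add: Pe_def q_sum_l q_cs_l)
    ultimately show ?thesis by simp
  qed
  have g2: "(\<lambda>n. q (ue n) (Pe n)) sums S"
  proof -
    have "(\<lambda>n. a m n * q (ue n) (uf m)) sums q (uf m) (uf m)" for m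
      using sums_cip_left[OF pe[of m], of "Th (uf m)"]
      by (simp add: cip_cs_left cnja q_def)
    hence "(\<lambda>n. \<Sum>m<M. a m n * q (ue n) (uf m)) sums S"
      unfolding S_def by (rule sums_sum)
    moreover have "q (ue n) (Pe n) = (\<Sum>m<M. a m n * q (ue n) (uf m))" for n
      by (simp add: Pe_def q_sum_r q_cs_r)
    ultimately show ?thesis by simp
  qed
  have g3: "(\<lambda>n. q (Pe n) (Pe n)) sums S"
  proof -
    have d: "(\<lambda>n. a m' n * cnj (a m n)) sums (if m' = m then 1 else 0)" for m m'
      using parseval_ip[OF oe, of "uf m'" "uf m"] by (simp add: cnja on[OF of])
    have "(\<lambda>n. cnj (a m n) * (a m' n * q (uf m) (uf m'))) sums (if m' = m then q (uf m) (uf m') else 0)" for m m'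
      using sums_mult2[OF d[of m' m], of "q (uf m) (uf m')"] by (cases "m' = m") (simp_all add: algebra_simps)
    hence "(\<lambda>n. \<Sum>m<M. \<Sum>m'<M. cnj (a m n) * (a m' n * q (uf m) (uf m')))
            sums (\<Sum>m<M. \<Sum>m'<M. (if m' = m then q (uf m) (uf m') else 0))"
      by (intro sums_sum)
    moreover have "(\<Sum>m<M. \<Sum>m'<M. (if m' = m then q (uf m) (uf m') else 0)) = S"
      unfolding S_def by (rule sum.cong) (simp_all add: sum.delta)
    moreover have "q (Pe n) (Pe n) = (\<Sum>m<M. \<Sum>m'<M. cnj (a m n) * (a m' n * q (uf m) (uf m')))" for n
    proof -
      have "q (Pe n) (Pe n) = (\<Sum>i<M. \<Sum>j<M. a i n * (cnj (a j n) * q (uf j) (uf i)))"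
        by (simp add: Pe_def q_sum_l q_sum_r q_cs_l q_cs_r sum_distrib_left)
      also have "\<dots> = (\<Sum>j<M. \<Sum>i<M. a i n * (cnj (a j n) * q (uf j) (uf i)))" by (rule sum.swap)
      finally show ?thesis by (simp add: ac_simps)
    qed
    ultimately show ?thesis by simp
  qed
  have "(\<lambda>n. q (ue n) (ue n) - q (ue n) (Pe n) - q (Pe n) (ue n) + q (Pe n) (Pe n)) sums (tr - S - S + S)"
    by (intro sums_add sums_diff trs g1 g2 g3)
  moreover have "q (ue n - Pe n) (ue n - Pe n) = q (ue n) (ue n) - q (ue n) (Pe n) - q (Pe n) (ue n) + q (Pe n) (Pe n)" for n
    by (simp add: q_diff_l q_diff_r)
  ultimately have "(\<lambda>n. q (ue n - Pe n) (ue n - Pe n)) sums (tr - S)" by simp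
  hence X: "(\<lambda>n. Re (q (ue n - Pe n) (ue n - Pe n))) sums Re (tr - S)" by (rule sums_Re)
  have "0 \<le> (\<Sum>n. Re (q (ue n - Pe n) (ue n - Pe n)))"
    by (rule suminf_nonneg[OF sums_summable[OF X]]) (rule q_pos)
  hence "0 \<le> Re (tr - S)" using sums_unique[OF X] by simp
  hence ReS: "Re S \<le> Re tr" by simp
  have "(\<Sum>m<M. cmod (K \<alpha> \<phi> (f m)) ^ 2) \<le> (\<Sum>m<M. Re (q (uf m) (uf m)))"
    by (rule sum_mono) (rule q_lower)
  also have "\<dots> = Re S" by (simp add: S_def)
  also have "\<dots> \<le> Re tr" by (rule ReS)
  finally show ?thesis by (simp add: Retr \<phi>_def)
qed



theorem corollary6p5:
  fixes e f :: "nat \<Rightarrow> vec"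
    and A :: "nat set"
    and K :: "nat \<Rightarrow> vec \<Rightarrow> vec \<Rightarrow> complex"
    and Q :: "(nat \<Rightarrow> nat \<Rightarrow> complex) \<Rightarrow> vec \<Rightarrow> vec \<Rightarrow> complex"
  assumes onb_e: "is_ONB e" and onb_f: "is_ONB f"
    and genop: "\<forall>\<alpha>\<in>A. gen_op e f (K \<alpha>)"
    and Q_lin: "\<forall>c d a b g h. fin_supp_mat c \<and> fin_supp_mat d \<and> g \<in> fspan f \<and> h \<in> fspan f \<longrightarrow>
                  Q (\<lambda>k l. a * c k l + b * d k l) g h = a * Q c g h + b * Q d g h"
    and Q_sesq: "\<forall>c. fin_supp_mat c \<longrightarrow>
                  (\<forall>g\<in>fspan f. \<forall>g'\<in>fspan f. \<forall>h\<in>fspan f. \<forall>a b.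
                     Q c (\<lambda>i. a * g i + b * g' i) h = cnj a * Q c g h + cnj b * Q c g' h
                   \<and> Q c h (\<lambda>i. a * g i + b * g' i) = a * Q c h g + b * Q c h g')"
    and Q_repr: "\<forall>\<phi>\<in>fspan e. \<forall>\<phi>'\<in>fspan e. \<forall>g\<in>fspan f. \<forall>h\<in>fspan f.
                  ((\<lambda>\<alpha>. K \<alpha> \<phi> g * cnj (K \<alpha> \<phi>' h)) has_sum Q (rank1 e \<phi> \<phi>') g h) A"
    and Q_cp: "\<forall>(n::nat) \<phi> \<psi>. (\<forall>k<n. \<phi> k \<in> fspan e \<and> \<psi> k \<in> fspan f) \<longrightarrow>
                  (let s = (\<Sum>k<n. \<Sum>l<n. Q (rank1 e (\<phi> k) (\<phi> l)) (\<psi> k) (\<psi> l))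
                   in Im s = 0 \<and> Re s \<ge> 0)"
    and Q_tp: "\<forall>c. fin_supp_mat c \<longrightarrow>
                  (\<exists>T. trace_class T
                     \<and> (\<forall>g\<in>fspan f. \<forall>h\<in>fspan f. ip g (T h) = Q c g h)
                     \<and> op_trace e T = mat_trace c)"
  shows "\<forall>\<alpha>\<in>A. \<exists>B Badj. bdd_op B \<and> bdd_op Badj
            \<and> (\<forall>x\<in>l2. \<forall>y\<in>l2. ip x (Badj y) = ip (B x) y)
            \<and> (\<forall>\<phi>\<in>fspan e. \<forall>g\<in>fspan f. ip g (B \<phi>) = K \<alpha> \<phi> g)
            \<and> (\<forall>\<phi>\<in>fspan e. \<forall>g\<in>fspan f. ip \<phi> (Badj g) = cnj (K \<alpha> \<phi> g))"
proof (intro ballI)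
  fix \<alpha> assume \<alpha>: "\<alpha> \<in> A"
  have el: "e n \<in> l2" for n using onb_e by (simp add: is_ONB_def)
  have fl: "f n \<in> l2" for n using onb_f by (simp add: is_ONB_def)
  have elall: "\<forall>n. e n \<in> l2" using el by blast
  have flall: "\<forall>n. f n \<in> l2" using fl by blast
  define ue where "ue n = va (e n)" for n
  define uf where "uf n = va (f n)" for n
  have vue: "vr (ue n) = e n" for n by (simp add: ue_def el)
  have vuf: "vr (uf n) = f n" for n by (simp add: uf_def fl)
  have oe: "onb ue" unfolding ue_def by (rule onb_ONB[OF onb_e])
  have of: "onb uf" unfolding uf_def by (rule onb_ONB[OF onb_f])
  have go: "gen_op e f (K \<alpha>)" using genop \<alpha> by blast
  define k where "k n m = K \<alpha> (e n) (f m)" for n m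
  have kb: "KB k"
    unfolding KB_def
  proof (intro allI)
    fix c :: "nat \<Rightarrow> complex" and N M :: nat
    have "(\<Sum>n<N. c n * k n m) = K \<alpha> (\<lambda>i. \<Sum>n<N. c n * e n i) (f m)" for m
      unfolding k_def by (rule K_lin_sum[OF go fspan_basis, symmetric])
    thus "(\<Sum>m<M. cmod (\<Sum>n<N. c n * k n m) ^ 2) \<le> (\<Sum>n<N. cmod (c n) ^ 2)"
      using main_ineq[OF onb_e onb_f Q_repr Q_tp \<alpha>, where M=M and N=N and c=c] by simp
  qed
  define Bh where "Bh = Op ue uf k"
  define Ah where "Ah = Op uf ue (\<lambda>m n. cnj (k n m))"
  have kb': "KB (\<lambda>m n. cnj (k n m))" by (rule dual_KB[OF oe of kb])
  define B where "B x = vr (Bh (va x))" for x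
  define Badj where "Badj y = vr (Ah (va y))" for y
  have va_lin: "va (\<lambda>i. a * x i + b * y i) = cs a (va x) + cs b (va y)" if "x \<in> l2" "y \<in> l2" for x y a b
    by (rule hv_eqI) (simp add: vr_add vr_cs that l2_add l2_scale)
  have bB: "bdd_op B"
    unfolding bdd_op_def
  proof (intro conjI ballI allI)
    show "B x \<in> l2" for x by (simp add: B_def vr_in)
    show "B (\<lambda>i. a * x i + b * y i) = (\<lambda>i. a * B x i + b * B y i)" if "x \<in> l2" "y \<in> l2" for x y a b
      by (simp add: B_def va_lin that Bh_def Op_add[OF oe of kb] Op_cs[OF oe of kb] vr_add vr_cs)
    show "\<exists>C. \<forall>x\<in>l2. l2norm (B x) \<le> C * l2norm x"
    proof (intro exI ballI)
      fix x assume "x \<in> l2"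
      have "l2norm (B x) = norm (Bh (va x))" by (simp add: B_def norm_l2norm)
      also have "\<dots> \<le> norm (va x)" unfolding Bh_def by (rule Op_norm[OF oe of kb])
      also have "\<dots> = 1 * l2norm x" by (simp add: norm_l2norm \<open>x \<in> l2\<close>)
      finally show "l2norm (B x) \<le> 1 * l2norm x" .
    qed
  qed
  have bA: "bdd_op Badj"
    unfolding bdd_op_def
  proof (intro conjI ballI allI)
    show "Badj x \<in> l2" for x by (simp add: Badj_def vr_in)
    show "Badj (\<lambda>i. a * x i + b * y i) = (\<lambda>i. a * Badj x i + b * Badj y i)" if "x \<in> l2" "y \<in> l2" for x y a b
      by (simp add: Badj_def va_lin that Ah_def Op_add[OF of oe kb'] Op_cs[OF of oe kb'] vr_add vr_cs)
    show "\<exists>C. \<forall>x\<in>l2. l2norm (Badj x) \<le> C * l2norm x"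
    proof (intro exI ballI)
      fix x assume "x \<in> l2"
      have "l2norm (Badj x) = norm (Ah (va x))" by (simp add: Badj_def norm_l2norm)
      also have "\<dots> \<le> norm (va x)" unfolding Ah_def by (rule Op_norm[OF of oe kb'])
      also have "\<dots> = 1 * l2norm x" by (simp add: norm_l2norm \<open>x \<in> l2\<close>)
      finally show "l2norm (Badj x) \<le> 1 * l2norm x" .
    qed
  qed
  have adj: "ip x (Badj y) = ip (B x) y" if "x \<in> l2" "y \<in> l2" for x y
  proof -
    have "ip x (Badj y) = cip (va x) (Ah (va y))" by (simp add: cip_def Badj_def that)
    also have "\<dots> = cip (Bh (va x)) (va y)" unfolding Ah_def Bh_def by (rule Op_adjoint[OF oe of kb])
    also have "\<dots> = ip (B x) y" by (simp add: cip_def B_def that)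
    finally show ?thesis .
  qed
  have Kid: "ip g (B \<phi>) = K \<alpha> \<phi> g" if \<phi>: "\<phi> \<in> fspan e" and g: "g \<in> fspan f" for \<phi> g
  proof -
    obtain c N where \<phi>1: "\<phi> = vr (\<Sum>n<N. cs (c n) (ue n))" and \<phi>2: "\<phi> = (\<lambda>i. \<Sum>n<N. c n * e n i)"
      using fspan_repr[OF \<phi> elall] unfolding ue_def by blast
    obtain d M where g1: "g = vr (\<Sum>m<M. cs (d m) (uf m))" and g2: "g = (\<lambda>i. \<Sum>m<M. d m * f m i)"
      using fspan_repr[OF g flall] unfolding uf_def by blast
    have "Bh (va \<phi>) = (\<Sum>n<N. cs (c n) (col uf k n))"
      unfolding \<phi>1 Bh_def by (simp add: Op_fin[OF oe of kb])
    hence "ip g (B \<phi>) = cip (\<Sum>m<M. cs (d m) (uf m)) (\<Sum>n<N. cs (c n) (col uf k n))"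
      by (simp add: B_def cip_def g1)
    also have "\<dots> = (\<Sum>m<M. cnj (d m) * (\<Sum>n<N. c n * k n m))"
      by (simp add: cip_sum_left cip_cs_left fin_col_coeff[OF oe of kb])
    also have "\<dots> = (\<Sum>m<M. cnj (d m) * K \<alpha> \<phi> (f m))"
    proof (rule sum.cong[OF refl])
      fix m
      have "K \<alpha> \<phi> (f m) = (\<Sum>n<N. c n * K \<alpha> (e n) (f m))"
        unfolding \<phi>2 by (rule K_lin_sum[OF go fspan_basis])
      thus "cnj (d m) * (\<Sum>n<N. c n * k n m) = cnj (d m) * K \<alpha> \<phi> (f m)" by (simp add: k_def)
    qed
    also have "\<dots> = K \<alpha> \<phi> g" unfolding g2 by (rule K_clin_sum[OF go \<phi>, symmetric])
    finally show ?thesis .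
  qed
  show "\<exists>B Badj. bdd_op B \<and> bdd_op Badj
            \<and> (\<forall>x\<in>l2. \<forall>y\<in>l2. ip x (Badj y) = ip (B x) y)
            \<and> (\<forall>\<phi>\<in>fspan e. \<forall>g\<in>fspan f. ip g (B \<phi>) = K \<alpha> \<phi> g)
            \<and> (\<forall>\<phi>\<in>fspan e. \<forall>g\<in>fspan f. ip \<phi> (Badj g) = cnj (K \<alpha> \<phi> g))"
  proof (intro exI conjI ballI)
    show "bdd_op B" by (rule bB)
    show "bdd_op Badj" by (rule bA)
    show "ip x (Badj y) = ip (B x) y" if "x \<in> l2" "y \<in> l2" for x y using adj that .
    show "ip g (B \<phi>) = K \<alpha> \<phi> g" if "\<phi> \<in> fspan e" "g \<in> fspan f" for \<phi> g using Kid that .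
    show "ip \<phi> (Badj g) = cnj (K \<alpha> \<phi> g)" if \<phi>: "\<phi> \<in> fspan e" and g: "g \<in> fspan f" for \<phi> g
    proof -
      have pl: "\<phi> \<in> l2" by (rule fspan_l2[OF elall \<phi>])
      have gl: "g \<in> l2" by (rule fspan_l2[OF flall g])
      have "ip \<phi> (Badj g) = ip (B \<phi>) g" by (rule adj[OF pl gl])
      also have "\<dots> = cnj (ip g (B \<phi>))" by (rule ip_cnj[OF gl]) (simp add: B_def vr_in)
      also have "\<dots> = cnj (K \<alpha> \<phi> g)" by (simp add: Kid[OF \<phi> g])
      finally show ?thesis .
    qed
  qed
qed


end
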